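(* Let $F$ be a field of characteristic $\neq 2$ and let $a,b\in F^*$ be such that the quadratic form $\langle 1,a,b,-ab\rangle$ is not weakly isotropic over $F$. Let $t\in F^*$ be a nonzero sum of squares in $F$. Then $\langle 1,a,b,-ab\rangle$ is not weakly isotropic over $F(\sqrt{t})$.
   Context: All fields have characteristic different from $2$; quadratic forms are finite-dimensional and nondegenerate. For a form $q$ and an integer $m\geq 1$, $m\times q$ denotes the orthogonal sum of $m$ copies of $q$. A form $q$ over $F$ is called weakly isotropic if $m\times q$ is isotropic for some integer $m\geq 1$. *)

theory Defs
  imports Main
begin

text \<open>A diagonal quadratic form  <q_0,...,q_(n-1)>  over a field is represented by
  the list of its coefficients.\<close>

definition isotropic :: "'a::field list \<Rightarrow> bool" where
  "isotropic q \<longleftrightarrow>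
     (\<exists>x::nat \<Rightarrow> 'a. (\<exists>i<length q. x i \<noteq> 0) \<and> (\<Sum>i<length q. q ! i * (x i)^2) = 0)"

definition orth_mult :: "nat \<Rightarrow> 'a list \<Rightarrow> 'a list" where
  "orth_mult m q = concat (replicate m q)"

definition weakly_isotropic :: "'a::field list \<Rightarrow> bool" where
  "weakly_isotropic q \<longleftrightarrow> (\<exists>m\<ge>1. isotropic (orth_mult m q))"

definition is_sum_of_squares :: "'a::field \<Rightarrow> bool" where
  "is_sum_of_squares t \<longleftrightarrow> (\<exists>n (y::nat \<Rightarrow> 'a). t = (\<Sum>i<n. (y i)^2))"

definition field_hom :: "('a::field \<Rightarrow> 'b::field) \<Rightarrow> bool" where
  "field_hom \<phi> \<longleftrightarrow> \<phi> 1 = 1 \<and> (\<forall>x y. \<phi> (x + y) = \<phi> x + \<phi> y) \<and> (\<forall>x y. \<phi> (x * y) = \<phi> x * \<phi> y)"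

text \<open>K (with embedding phi of F and element s) is F(sqrt t): s^2 = t and K = F + F s.\<close>
definition is_sqrt_extension :: "('a::field \<Rightarrow> 'b::field) \<Rightarrow> 'b \<Rightarrow> 'a \<Rightarrow> bool" where
  "is_sqrt_extension \<phi> s t \<longleftrightarrow> field_hom \<phi> \<and> s^2 = \<phi> t \<and> (\<forall>z. \<exists>x y. z = \<phi> x + \<phi> y * s)"

end

theory Submission imports Defs begin
lemma sum_app:
  fixes P Q :: "'a::field list"
  shows "(\<Sum>i<length (P@Q). (P@Q)!i * ((\<lambda>i. if i < length P then x i else y (i - length P)) i)^2)
     = (\<Sum>i<length P. P!i * (x i)^2) + (\<Sum>i<length Q. Q!i * (y i)^2)"
proof -
  have "(\<Sum>i<length P + length Q. (P@Q)!i * ((\<lambda>i. if i < length P then x i else y (i - length P)) i)^2)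
    = (\<Sum>i<length P. (P@Q)!i * ((\<lambda>i. if i < length P then x i else y (i - length P)) i)^2)
     + (\<Sum>i\<in>{length P..<length P + length Q}. (P@Q)!i * ((\<lambda>i. if i < length P then x i else y (i - length P)) i)^2)"
    by (simp only: lessThan_atLeast0 sum.atLeastLessThan_concat[of 0 "length P" "length P + length Q", symmetric])
  also have "(\<Sum>i\<in>{length P..<length P + length Q}. (P@Q)!i * ((\<lambda>i. if i < length P then x i else y (i - length P)) i)^2)
     = (\<Sum>i<length Q. Q!i * (y i)^2)"
  proof -
    have "(\<Sum>i\<in>{length P..<length P + length Q}. (P@Q)!i * ((\<lambda>i. if i < length P then x i else y (i - length P)) i)^2)
      = (\<Sum>i\<in>{0+length P..<length Q + length P}. (P@Q)!i * ((\<lambda>i. if i < length P then x i else y (i - length P)) i)^2)"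
      by (simp add: add.commute)
    also have "\<dots> = (\<Sum>i\<in>{0..<length Q}. (P@Q)!(i + length P) * ((\<lambda>i. if i < length P then x i else y (i - length P)) (i+length P))^2)"
      by (rule sum.shift_bounds_nat_ivl)
    also have "\<dots> = (\<Sum>i<length Q. Q!i * (y i)^2)"
      by (simp add: nth_append lessThan_atLeast0)
    finally show ?thesis .
  qed
  also have "(\<Sum>i<length P. (P@Q)!i * ((\<lambda>i. if i < length P then x i else y (i - length P)) i)^2)
     = (\<Sum>i<length P. P!i * (x i)^2)"
    by (rule sum.cong) (auto simp: nth_append)
  finally show ?thesis by simp
qed

lemma rep:
  fixes Q :: "'a::field list"
  shows "\<exists>Z. (\<Sum>i<length (concat (replicate k Q)). concat (replicate k Q) ! i * (Z i)^2)
      = (\<Sum>j<k. (c j)^2) * (\<Sum>i<length Q. Q!i * (w i)^2)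
    \<and> ((\<exists>j<k. c j \<noteq> 0) \<and> (\<exists>i<length Q. w i \<noteq> 0) \<longrightarrow> (\<exists>i<length (concat (replicate k Q)). Z i \<noteq> 0))"
proof (induction k arbitrary: c)
  case 0
  then show ?case by simp
next
  case (Suc k)
  from Suc.IH[of "\<lambda>j. c (Suc j)"] obtain Z where
    Z1: "(\<Sum>i<length (concat (replicate k Q)). concat (replicate k Q) ! i * (Z i)^2)
      = (\<Sum>j<k. (c (Suc j))^2) * (\<Sum>i<length Q. Q!i * (w i)^2)"
    and Z2: "(\<exists>j<k. c (Suc j) \<noteq> 0) \<and> (\<exists>i<length Q. w i \<noteq> 0) \<longrightarrow> (\<exists>i<length (concat (replicate k Q)). Z i \<noteq> 0)"
    by blast
  define z where "z = (\<lambda>i. if i < length Q then c 0 * w i else Z (i - length Q))"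
  have cs: "concat (replicate (Suc k) Q) = Q @ concat (replicate k Q)" by simp
  have "(\<Sum>i<length (concat (replicate (Suc k) Q)). concat (replicate (Suc k) Q) ! i * (z i)^2)
     = (\<Sum>i<length Q. Q!i * (c 0 * w i)^2) + (\<Sum>i<length (concat (replicate k Q)). concat (replicate k Q) ! i * (Z i)^2)"
    unfolding cs z_def by (rule sum_app)
  also have "(\<Sum>i<length Q. Q!i * (c 0 * w i)^2) = (c 0)^2 * (\<Sum>i<length Q. Q!i * (w i)^2)"
    by (simp add: sum_distrib_left power_mult_distrib algebra_simps)
  also have "(\<Sum>j<Suc k. (c j)^2) = (c 0)^2 + (\<Sum>j<k. (c (Suc j))^2)"
    by (subst sum.lessThan_Suc_shift) simp
  ultimately have E: "(\<Sum>i<length (concat (replicate (Suc k) Q)). concat (replicate (Suc k) Q) ! i * (z i)^2)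
     = (\<Sum>j<Suc k. (c j)^2) * (\<Sum>i<length Q. Q!i * (w i)^2)"
    using Z1 by (simp add: algebra_simps)
  have N: "\<exists>i<length (concat (replicate (Suc k) Q)). z i \<noteq> 0"
    if h1: "\<exists>j<Suc k. c j \<noteq> 0" and h2: "\<exists>i<length Q. w i \<noteq> 0"
  proof (cases "c 0 = 0")
    case False
    from h2 obtain i where "i < length Q" "w i \<noteq> 0" by blast
    then show ?thesis using False by (intro exI[of _ i]) (simp add: z_def)
  next
    case True
    with h1 obtain j where "j < Suc k" "c j \<noteq> 0" by blast
    with True obtain j' where "j' < k" "c (Suc j') \<noteq> 0" by (cases j) auto
    with Z2 h2 obtain i where "i < length (concat (replicate k Q))" "Z i \<noteq> 0" by blast
    then show ?thesis by (intro exI[of _ "i + length Q"]) (simp add: z_def)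
  qed
  show ?case using E N by blast
qed

lemma concat_rep_mult: "concat (replicate k (concat (replicate m q))) = concat (replicate (k*m) q)"
  by (induction k) (simp_all add: replicate_add)

lemma hom_basic:
  assumes "field_hom \<phi>"
  shows "\<phi> 0 = 0" "\<phi> (-x) = - \<phi> x" "\<phi> (x*y) = \<phi> x * \<phi> y" "\<phi> (x+y) = \<phi> x + \<phi> y" "\<phi> 1 = 1"
    "\<phi> (x^2) = (\<phi> x)^2"
proof -
  show h0: "\<phi> 0 = 0" using assms unfolding field_hom_def by (metis add_cancel_right_right add_0)
  show "\<phi> (-x) = - \<phi> x" using assms h0 unfolding field_hom_def
    by (metis add.right_inverse add_eq_0_iff)
  show "\<phi> (x*y) = \<phi> x * \<phi> y" "\<phi> (x+y) = \<phi> x + \<phi> y" "\<phi> 1 = 1" using assms unfolding field_hom_def by auto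
  show "\<phi> (x^2) = (\<phi> x)^2" using assms unfolding field_hom_def by (simp add: power2_eq_square)
qed

lemma hom_inj:
  fixes \<phi> :: "'a::field \<Rightarrow> 'b::field"
  assumes "field_hom \<phi>" "\<phi> x = 0" shows "x = 0"
proof (rule ccontr)
  assume "x \<noteq> 0"
  then have "\<phi> 1 = \<phi> x * \<phi> (inverse x)" using hom_basic(3)[OF assms(1)] by (metis right_inverse)
  then show False using assms hom_basic(5)[OF assms(1)] by simp
qed

lemma hom_sum:
  assumes "field_hom \<phi>"
  shows "\<phi> (\<Sum>i<(n::nat). f i) = (\<Sum>i<n. \<phi> (f i))"
  by (induction n) (simp_all add: hom_basic[OF assms])

lemma hom_div:
  fixes \<phi> :: "'a::field \<Rightarrow> 'b::field"
  assumes "field_hom \<phi>" "y \<noteq> 0" shows "\<phi> (x / y) = \<phi> x / \<phi> y"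
proof -
  have "\<phi> y \<noteq> 0" using hom_inj[OF assms(1)] assms(2) by blast
  moreover have "\<phi> (x/y) * \<phi> y = \<phi> x" using assms by (metis hom_basic(3) nonzero_divide_eq_eq)
  ultimately show ?thesis by (simp add: eq_divide_eq)
qed


theorem lemma2p2:
  fixes a b t :: "'a::field" and \<phi> :: "'a \<Rightarrow> 'b::field" and s :: 'b
  assumes char: "(2::'a) \<noteq> 0"
    and a: "a \<noteq> 0" and b: "b \<noteq> 0"
    and not_wi: "\<not> weakly_isotropic [1, a, b, - (a * b)]"
    and t: "t \<noteq> 0" and sos: "is_sum_of_squares t"
    and ext: "is_sqrt_extension \<phi> s t"
  shows "\<not> weakly_isotropic (map \<phi> [1, a, b, - (a * b)])"
proof
  define q0 where "q0 = [1, a, b, - (a * b)]"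
  have hom: "field_hom \<phi>" and st: "s^2 = \<phi> t" and surj: "\<forall>z. \<exists>x y. z = \<phi> x + \<phi> y * s"
    using ext unfolding is_sqrt_extension_def by auto
  note hb = hom_basic[OF hom]
  assume "weakly_isotropic (map \<phi> [1, a, b, - (a * b)])"
  then obtain m z i0 where m: "m \<ge> 1" and i0: "i0 < length (orth_mult m (map \<phi> q0))" "z i0 \<noteq> 0"
    and z0: "(\<Sum>i<length (orth_mult m (map \<phi> q0)). orth_mult m (map \<phi> q0) ! i * (z i)^2) = 0"
    unfolding weakly_isotropic_def isotropic_def q0_def by blast
  define Q where "Q = orth_mult m q0"
  define L where "L = length Q"
  have Qb: "orth_mult m (map \<phi> q0) = map \<phi> Q"
    unfolding Q_def orth_mult_def by (simp add: map_concat)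
  have i0': "i0 < L" using i0 unfolding Qb L_def by simp
  have z0': "(\<Sum>i<L. \<phi> (Q ! i) * (z i)^2) = 0" using z0 unfolding Qb L_def by simp
  have "\<forall>i. \<exists>x. \<exists>y. z i = \<phi> x + \<phi> y * s" using surj by blast
  then obtain X where "\<forall>i. \<exists>y. z i = \<phi> (X i) + \<phi> y * s" by metis
  then obtain Y where XY: "\<And>i. z i = \<phi> (X i) + \<phi> (Y i) * s" by metis
  have trm: "\<phi> (Q!i) * (z i)^2 = \<phi> (Q!i * (X i)^2 + t * (Q!i * (Y i)^2)) + 2 * \<phi> (Q!i * X i * Y i) * s" for i
  proof -
    have "\<phi> (Q!i) * (z i)^2 = \<phi> (Q!i) * (\<phi> (X i))^2 + \<phi> (Q!i) * (\<phi> (Y i))^2 * s^2 + 2 * \<phi> (Q!i) * \<phi> (X i) * \<phi> (Y i) * s"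
      unfolding XY by (simp add: power2_eq_square algebra_simps)
    also have "\<dots> = \<phi> (Q!i * (X i)^2 + t * (Q!i * (Y i)^2)) + 2 * \<phi> (Q!i * X i * Y i) * s"
      unfolding st by (simp add: hb algebra_simps)
    finally show ?thesis .
  qed
  define A where "A = (\<Sum>i<L. Q!i * (X i)^2 + t * (Q!i * (Y i)^2))"
  define B where "B = (\<Sum>i<L. Q!i * X i * Y i)"
  have AB: "\<phi> A + 2 * \<phi> B * s = 0"
  proof -
    have "0 = (\<Sum>i<L. \<phi> (Q!i * (X i)^2 + t * (Q!i * (Y i)^2)) + 2 * \<phi> (Q!i * X i * Y i) * s)"
      using z0' trm by simp
    also have "\<dots> = \<phi> A + 2 * \<phi> B * s"
      unfolding A_def B_def hom_sum[OF hom] by (simp add: sum.distrib sum_distrib_left sum_distrib_right algebra_simps)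
    finally show ?thesis by simp
  qed
  have "\<phi> 2 = \<phi> 1 + \<phi> 1" using hb(4)[of 1 1] by (simp only: one_add_one)
  then have phi2: "\<phi> 2 = 2" by (simp add: hb(5))
  have two: "(2::'b) \<noteq> 0" using phi2 hom_inj[OF hom, of 2] char by auto
  show False
  proof (cases "\<phi> B = 0")
    case False
    then have B0: "B \<noteq> 0" using hb(1) by auto
    define c where "c = - A / (2 * B)"
    have "s = \<phi> c"
    proof -
      have "\<phi> c = - \<phi> A / (2 * \<phi> B)" unfolding c_def
        using hom_div[OF hom, of "2*B" "-A"] B0 char by (simp add: hb phi2)
      then have e1: "\<phi> c * (2 * \<phi> B) = - \<phi> A" using False two by (simp add: field_simps)
      have "(s - \<phi> c) * (2 * \<phi> B) = 0" using e1 AB by (simp add: algebra_simps)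
      then show ?thesis using False two by simp
    qed
    define zz where "zz = (\<lambda>i. X i + Y i * c)"
    have pz: "\<phi> (zz i) = z i" for i unfolding zz_def XY \<open>s = \<phi> c\<close> by (simp add: hb)
    have "\<phi> (\<Sum>i<L. Q!i * (zz i)^2) = 0"
      unfolding hom_sum[OF hom] using z0' by (simp add: hb pz)
    then have "(\<Sum>i<L. Q!i * (zz i)^2) = 0" using hom_inj[OF hom] by blast
    moreover have "zz i0 \<noteq> 0" using pz[of i0] i0 hb(1) by auto
    ultimately have "isotropic (orth_mult m q0)"
      unfolding isotropic_def using i0' unfolding L_def Q_def by blast
    then show False using not_wi m unfolding weakly_isotropic_def q0_def by blast
  next
    case True
    then have "\<phi> A = 0" using AB by simp
    then have A0: "A = 0" using hom_inj[OF hom] by blast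
    from sos obtain n :: nat and y where ty: "t = (\<Sum>i<n. (y i)^2)" unfolding is_sum_of_squares_def by blast
    define R where "R = concat (replicate n Q)"
    obtain Z where Z1: "(\<Sum>i<length R. R ! i * (Z i)^2) = (\<Sum>j<n. (y j)^2) * (\<Sum>i<length Q. Q!i * (Y i)^2)"
      and Z2: "(\<exists>j<n. y j \<noteq> 0) \<and> (\<exists>i<length Q. Y i \<noteq> 0) \<longrightarrow> (\<exists>i<length R. Z i \<noteq> 0)"
      using rep[of n Q y Y] unfolding R_def by blast
    define V where "V = (\<lambda>i. if i < length Q then X i else Z (i - length Q))"
    have "(\<Sum>i<length (Q@R). (Q@R)!i * (V i)^2) = (\<Sum>i<length Q. Q!i * (X i)^2) + (\<Sum>i<length R. R!i * (Z i)^2)"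
      unfolding V_def by (rule sum_app)
    also have "\<dots> = A" unfolding Z1 A_def L_def ty[symmetric]
      by (simp add: sum.distrib sum_distrib_left)
    finally have V0: "(\<Sum>i<length (Q@R). (Q@R)!i * (V i)^2) = 0" using A0 by simp
    have QR: "Q @ R = orth_mult (Suc n * m) q0"
      unfolding R_def Q_def orth_mult_def by (simp add: concat_rep_mult replicate_add)
    have "X i0 \<noteq> 0 \<or> Y i0 \<noteq> 0" using i0(2) XY[of i0] hb(1) by auto
    then have "\<exists>i<length (Q@R). V i \<noteq> 0"
    proof
      assume "X i0 \<noteq> 0" then show ?thesis using i0' unfolding L_def V_def by (intro exI[of _ i0]) simp
    next
      assume Yi: "Y i0 \<noteq> 0"
      have "\<exists>j<n. y j \<noteq> 0" 
      proof (rule ccontr)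
        assume "\<not> (\<exists>j<n. y j \<noteq> 0)"
        then have "t = 0" unfolding ty by (intro sum.neutral) simp
        then show False using t by simp
      qed
      with Z2 Yi i0' obtain i where "i < length R" "Z i \<noteq> 0" unfolding L_def by blast
      then show ?thesis unfolding V_def by (intro exI[of _ "i + length Q"]) simp
    qed
    with V0 have "isotropic (orth_mult (Suc n * m) q0)"
      unfolding isotropic_def QR by blast
    moreover have "Suc n * m \<ge> 1" using m by simp
    ultimately show False using not_wi unfolding weakly_isotropic_def q0_def by blast
  qed
qed

end
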